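(* Let $A[0],\dots,A[m-1]$ and $B[0],\dots,B[n-1]$ be arrays of elements whose keys are totally preordered by $\leq$, each array sorted so that $A[j-1]\leq A[j]$ for $1\leq j<m$ and $B[k-1]\leq B[k]$ for $1\leq k<n$. Let $C=\mathsf{stable\_merge}(A,B,\leq)$. Then for every $i$ with $0\leq i<m+n$ there exist a unique $j$ with $0\leq j\leq m$ and a unique $k$ with $0\leq k\leq n$ such that $j+k=i$ and (1) $j=0$ or $A[j-1]\leq B[k]$, and (2) $k=0$ or $B[k-1]<A[j]$. Moreover these $j,k$ satisfy $\mathsf{stable\_merge}(A[0,\ldots,j-1],B[0,\ldots,k-1],\leq)=C[0,\ldots,i-1]$.
   Context: Arrays are indexed from $0$. By convention $A[-1]=B[-1]=-\infty$ and $A[m]=B[n]=+\infty$ (sentinels, not stored), so that expressions such as $A[m]$ or $B[n]$ in the conditions are meaningful. $\mathsf{stable\_merge}(X,Y,\leq)$ denotes the sorted (with respect to $\leq$ on keys) sequence consisting of all elements of $X$ and $Y$ in which the relative order of elements is stable: elements of $X$ keep their relative order, elements of $Y$ keep their relative order, and whenever an element of $X$ and an element of $Y$ have equal keys, the element of $X$ comes first. For an output position $i$, the indices $j,k$ are called the co-ranks of the rank $i$. *)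

theory Defs
  imports Main
begin

fun stable_merge :: "'a list \<Rightarrow> 'a list \<Rightarrow> ('a \<Rightarrow> 'a \<Rightarrow> bool) \<Rightarrow> 'a list" where
  "stable_merge [] ys le = ys"
| "stable_merge xs [] le = xs"
| "stable_merge (x # xs) (y # ys) le =
     (if le x y then x # stable_merge xs (y # ys) le
      else y # stable_merge (x # xs) ys le)"

end

theory Submission
  imports Defs
begin

definition srt :: "('a \<Rightarrow> 'a \<Rightarrow> bool) \<Rightarrow> 'a list \<Rightarrow> bool" where
  "srt le A \<longleftrightarrow> (\<forall>a b. a \<le> b \<and> b < length A \<longrightarrow> le (A ! a) (A ! b))"

lemma srt_tl: "srt le (x # xs) \<Longrightarrow> srt le xs"
  unfolding srt_def
proof (intro allI impI)
  fix a b assume h: "\<forall>a b. a \<le> b \<and> b < length (x # xs) \<longrightarrow> le ((x # xs) ! a) ((x # xs) ! b)"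
    and ab: "a \<le> b \<and> b < length xs"
  then have "le ((x # xs) ! Suc a) ((x # xs) ! Suc b)"
    by (metis Suc_le_mono length_Cons not_less_eq)
  then show "le (xs ! a) (xs ! b)" by simp
qed

lemma srt_hd: "srt le (x # xs) \<Longrightarrow> k < length (x # xs) \<Longrightarrow> le x ((x # xs) ! k)"
  unfolding srt_def by (metis le0 nth_Cons_0)

lemma srt_of_adj:
  assumes refl: "\<forall>x. le x x" and trans: "\<forall>x y z. le x y \<longrightarrow> le y z \<longrightarrow> le x z"
    and s: "\<forall>j. 1 \<le> j \<and> j < length A \<longrightarrow> le (A ! (j - 1)) (A ! j)"
  shows "srt le A"
  unfolding srt_def
proof (intro allI impI)
  fix a b assume ab: "a \<le> b \<and> b < length A"
  then have "a \<le> b" "b < length A" by auto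
  then show "le (A ! a) (A ! b)"
  proof (induction b)
    case 0 then show ?case using refl by simp
  next
    case (Suc b)
    show ?case
    proof (cases "a = Suc b")
      case True then show ?thesis using refl by simp
    next
      case False
      then have "le (A ! a) (A ! b)" using Suc by auto
      moreover have "le (A ! b) (A ! Suc b)" using s Suc.prems by (metis diff_Suc_1 le_add1 plus_1_eq_Suc)
      ultimately show ?thesis using trans by blast
    qed
  qed
qed

lemma sm_nil2[simp]: "stable_merge xs [] le = xs"
  by (cases xs) auto

lemma exist:
  shows "\<forall>x y z. le x y \<longrightarrow> le y z \<longrightarrow> le x z \<Longrightarrow> srt le A \<Longrightarrow> srt le B \<Longrightarrow> i \<le> length A + length B \<Longrightarrow>
   \<exists>j k. j \<le> length A \<and> k \<le> length B \<and> j + k = i \<and>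
     (j = 0 \<or> k = length B \<or> le (A ! (j - 1)) (B ! k)) \<and>
     (k = 0 \<or> j = length A \<or> \<not> le (A ! j) (B ! (k - 1))) \<and>
     stable_merge (take j A) (take k B) le = take i (stable_merge A B le)"
proof (induction A B le arbitrary: i rule: stable_merge.induct)
  case (1 ys le)
  then show ?case by (intro exI[of _ 0] exI[of _ i]) auto
next
  case (2 v va le)
  then show ?case by (intro exI[of _ i] exI[of _ 0]) auto
next
  case (3 x xs y ys le)
  note trans = "3.prems"(1)
  show ?case
  proof (cases i)
    case 0 then show ?thesis by (intro exI[of _ 0] exI[of _ 0]) auto
  next
    case (Suc i')
    show ?thesis
    proof (cases "le x y")
      case True
      have "srt le xs" using "3.prems"(2) by (rule srt_tl)
      then obtain j k where jk: "j \<le> length xs" "k \<le> length (y # ys)" "j + k = i'"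
        "j = 0 \<or> k = length (y # ys) \<or> le (xs ! (j - 1)) ((y # ys) ! k)"
        "k = 0 \<or> j = length xs \<or> \<not> le (xs ! j) ((y # ys) ! (k - 1))"
        "stable_merge (take j xs) (take k (y # ys)) le = take i' (stable_merge xs (y # ys) le)"
        using "3.IH"(1)[OF True, of i'] "3.prems" Suc by auto
      have c1: "k = length (y # ys) \<or> le ((x # xs) ! (Suc j - 1)) ((y # ys) ! k)"
      proof (cases "k = length (y # ys)")
        case False
        show ?thesis
        proof (cases j)
          case 0
          have "le y ((y # ys) ! k)" using srt_hd[OF "3.prems"(3)] False jk(2) by auto
          then have "le x ((y # ys) ! k)" using True trans[rule_format, of x y "(y # ys) ! k"] by blast
          then show ?thesis using 0 by simp
        next
          case (Suc j0) then show ?thesis using jk(4) False by auto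
        qed
      qed simp
      have c2: "k = 0 \<or> Suc j = length (x # xs) \<or> \<not> le ((x # xs) ! Suc j) ((y # ys) ! (k - 1))"
        using jk(5) by auto
      have m: "stable_merge (take (Suc j) (x # xs)) (take k (y # ys)) le
          = x # stable_merge (take j xs) (take k (y # ys)) le"
        using True by (cases k) auto
      show ?thesis
        by (intro exI[of _ "Suc j"] exI[of _ k]) (use jk c1 c2 m Suc True in auto)
    next
      case False
      have "srt le ys" using "3.prems"(3) by (rule srt_tl)
      then obtain j k where jk: "j \<le> length (x # xs)" "k \<le> length ys" "j + k = i'"
        "j = 0 \<or> k = length ys \<or> le ((x # xs) ! (j - 1)) (ys ! k)"
        "k = 0 \<or> j = length (x # xs) \<or> \<not> le ((x # xs) ! j) (ys ! (k - 1))"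
        "stable_merge (take j (x # xs)) (take k ys) le = take i' (stable_merge (x # xs) ys le)"
        using "3.IH"(2)[OF False, of i'] "3.prems" Suc by auto
      have c2: "j = length (x # xs) \<or> \<not> le ((x # xs) ! j) ((y # ys) ! (Suc k - 1))"
      proof (cases "j = length (x # xs)")
        case False': False
        show ?thesis
        proof (cases k)
          case 0
          have "le x ((x # xs) ! j)" using srt_hd[OF "3.prems"(2)] False' jk(1) by auto
          have "\<not> le ((x # xs) ! j) y" using False trans \<open>le x ((x # xs) ! j)\<close>
            trans[rule_format, of x "(x # xs) ! j" y] by blast
          then show ?thesis using 0 by simp
        next
          case (Suc k0) then show ?thesis using jk(5) False' by auto
        qed
      qed simp
      have c1: "j = 0 \<or> Suc k = length (y # ys) \<or> le ((x # xs) ! (j - 1)) ((y # ys) ! Suc k)"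
        using jk(4) by auto
      have m: "stable_merge (take j (x # xs)) (take (Suc k) (y # ys)) le
          = y # stable_merge (take j (x # xs)) (take k ys) le"
        using False by (cases j) auto
      show ?thesis
        by (intro exI[of _ j] exI[of _ "Suc k"]) (use jk c1 c2 m Suc False in auto)
    qed
  qed
qed

theorem lemma1:
  fixes le :: "'a \<Rightarrow> 'a \<Rightarrow> bool" and A B C :: "'a list" and m n i :: nat
  assumes total: "\<forall>x y. le x y \<or> le y x"
    and trans: "\<forall>x y z. le x y \<longrightarrow> le y z \<longrightarrow> le x z"
    and mA: "length A = m" and nB: "length B = n"
    and sortedA: "\<forall>j. 1 \<le> j \<and> j < m \<longrightarrow> le (A ! (j - 1)) (A ! j)"
    and sortedB: "\<forall>k. 1 \<le> k \<and> k < n \<longrightarrow> le (B ! (k - 1)) (B ! k)"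
    and C: "C = stable_merge A B le"
    and i: "i < m + n"
  shows "(\<exists>!jk. case jk of (j, k) \<Rightarrow>
            j \<le> m \<and> k \<le> n \<and> j + k = i \<and>
            (j = 0 \<or> k = n \<or> le (A ! (j - 1)) (B ! k)) \<and>
            (k = 0 \<or> j = m \<or> \<not> le (A ! j) (B ! (k - 1))))
       \<and> (\<forall>j k. j \<le> m \<and> k \<le> n \<and> j + k = i \<and>
            (j = 0 \<or> k = n \<or> le (A ! (j - 1)) (B ! k)) \<and>
            (k = 0 \<or> j = m \<or> \<not> le (A ! j) (B ! (k - 1)))
            \<longrightarrow> stable_merge (take j A) (take k B) le = take i C)"
proof -
  have refl: "\<forall>x. le x x" using total by blast
  have sA: "srt le A" using srt_of_adj[OF refl trans] sortedA mA by blast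
  have sB: "srt le B" using srt_of_adj[OF refl trans] sortedB nB by blast
  define P where "P = (\<lambda>j k. j \<le> m \<and> k \<le> n \<and> j + k = i \<and>
            (j = 0 \<or> k = n \<or> le (A ! (j - 1)) (B ! k)) \<and>
            (k = 0 \<or> j = m \<or> \<not> le (A ! j) (B ! (k - 1))))"
  have uniq0: "j = j'" if p: "P j k" "P j' k'" "j < j'" for j k j' k'
  proof -
    have k: "k' < k" "k' < n" "j < m" "1 \<le> j'" "1 \<le> k" using p unfolding P_def by auto
    have "le (A ! (j' - 1)) (B ! k')" using p(2) k unfolding P_def by auto
    moreover have "\<not> le (A ! j) (B ! (k - 1))" using p(1) k unfolding P_def by auto
    moreover have "le (A ! j) (A ! (j' - 1))"
    proof -
      have "j \<le> j' - 1" "j' - 1 < m" using k p unfolding P_def by auto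
      then show ?thesis using sA mA unfolding srt_def by blast
    qed
    moreover have "le (B ! k') (B ! (k - 1))"
    proof -
      have "k' \<le> k - 1" "k - 1 < n" using k p unfolding P_def by auto
      then show ?thesis using sB nB unfolding srt_def by blast
    qed
    ultimately show ?thesis using trans by blast
  qed
  have uniq: "j = j' \<and> k = k'" if "P j k" "P j' k'" for j k j' k'
  proof -
    have "j = j'" using uniq0[OF that] uniq0[OF that(2) that(1)] by (metis linorder_neqE_nat)
    then show ?thesis using that unfolding P_def by auto
  qed
  obtain j0 k0 where e: "P j0 k0" "stable_merge (take j0 A) (take k0 B) le = take i C"
    using exist[OF trans sA sB, of i] i mA nB C unfolding P_def by auto
  have "\<exists>!jk. case jk of (j, k) \<Rightarrow> P j k"
    by (rule ex1I[of _ "(j0, k0)"]) (use e uniq in auto)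
  moreover have "\<forall>j k. P j k \<longrightarrow> stable_merge (take j A) (take k B) le = take i C"
    using e uniq by blast
  ultimately show ?thesis unfolding P_def by (simp only: split_def)
qed

end
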